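(* Let $\mathbf{t}_{3/2}=(t_i)_{i\ge 0}$ be the Thue--Morse word in base $3/2$. For integers $n\ge 0$, $N\ge 0$, a letter $c\in\{0,1\}$ and $k\in\mathbb{Z}$, let \[ C_n(c,k,N)=\#\{0\le i<N : t_i=c,\ i\equiv k \pmod{2^n}\}. \] Then for all $n\ge 0$, $c\in\{0,1\}$ and $k\in\mathbb{Z}$, \[ \lim_{N\to\infty}\frac{C_n(c,k,N)}{N}=\frac{1}{2^{n+1}}. \] In particular, the frequency of $0$ (and of $1$) in $\mathbf{t}_{3/2}$, i.e. $\lim_{N\to\infty}\#\{0\le i<N: t_i=c\}/N$, exists and equals $1/2$.
   Context: Base-$3/2$ expansions: $\langle 0\rangle_{3/2}$ is the empty word, and for $n\ge 1$, writing $2n=3m+d$ with integers $m\ge 0$ and $d\in\{0,1,2\}$, one sets $\langle n\rangle_{3/2}=\langle m\rangle_{3/2}\,d$ (so that $n=\sum_i d_i\frac12(\frac32)^i$ with digits $d_i\in\{0,1,2\}$). The Thue--Morse word in base $3/2$ is $\mathbf{t}_{3/2}=(t_n)_{n\ge0}\in\{0,1\}^{\mathbb{N}}$ where $t_n$ is the sum of the digits of $\langle n\rangle_{3/2}$ reduced modulo $2$. Equivalently, it is the unique binary sequence with $t_0=0$ and $t_{3n}=t_{3n+1}=t_{2n}$, $t_{3n+2}=1-t_{2n+1}$ for all $n\ge0$; it begins $001110111110110111110000110110\cdots$. *)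

theory Defs
  imports Complex_Main "HOL-Number_Theory.Cong"
begin

function base32 :: "nat \<Rightarrow> nat list" where
  "base32 n = (if n = 0 then [] else base32 ((2 * n) div 3) @ [(2 * n) mod 3])"
  by auto
termination
  by (relation "measure id") auto

definition tm32 :: "nat \<Rightarrow> nat" where
  "tm32 n = sum_list (base32 n) mod 2"

definition Ccount :: "nat \<Rightarrow> nat \<Rightarrow> int \<Rightarrow> nat \<Rightarrow> nat" where
  "Ccount n c k N = card {i. i < N \<and> tm32 i = c \<and> [int i = k] (mod 2 ^ n)}"

end

theory Submission
  imports Defs
begin

declare base32.simps[simp del]

lemma tm32_0: "tm32 0 = 0"
  unfolding tm32_def by (subst base32.simps) simp

lemma tm32_rec: "tm32 n = (tm32 (2*n div 3) + 2*n mod 3) mod 2"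
proof (cases "n = 0")
  case True then show ?thesis by (simp add: tm32_0)
next
  case False
  then have "base32 n = base32 (2*n div 3) @ [2*n mod 3]" by (subst base32.simps) simp
  then show ?thesis unfolding tm32_def by (simp add: mod_add_left_eq)
qed

lemma tm32_lt2: "tm32 n < 2"
  unfolding tm32_def by simp

definition sg :: "nat \<Rightarrow> real" where "sg x = (-1) ^ tm32 x"

lemma sg_3q: "sg (3*q) = sg (2*q)"
proof -
  have "tm32 (3*q) = (tm32 (2*q) + 0) mod 2" using tm32_rec[of "3*q"] by simp
  also have "\<dots> = tm32 (2*q)" using tm32_lt2[of "2*q"] by simp
  finally show ?thesis unfolding sg_def by simp
qed

lemma sg_3q1: "sg (3*q+1) = sg (2*q)"
proof -
  have a: "2*(3*q+1) div 3 = 2*q" "2*(3*q+1) mod 3 = 2" by presburger+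
  have "tm32 (3*q+1) = (tm32 (2*q) + 2) mod 2" using tm32_rec[of "3*q+1"] a by simp
  also have "\<dots> = tm32 (2*q)" using tm32_lt2[of "2*q"] by simp
  finally show ?thesis unfolding sg_def by simp
qed

lemma sg_3q2: "sg (3*q+2) = - sg (2*q+1)"
proof -
  have a: "2*(3*q+2) div 3 = 2*q+1" "2*(3*q+2) mod 3 = 1" by presburger+
  have "tm32 (3*q+2) = (tm32 (2*q+1) + 1) mod 2" using tm32_rec[of "3*q+2"] a by simp
  then show ?thesis unfolding sg_def using tm32_lt2[of "2*q+1"]
    by (cases "tm32 (2*q+1)") auto
qed

definition ee :: "real \<Rightarrow> complex" where "ee x = cis (2*pi*x)"

lemma ee_add: "ee (x + y) = ee x * ee y"
  unfolding ee_def by (simp add: cis_mult distrib_left)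

lemma ee_int: "x \<in> \<int> \<Longrightarrow> ee x = 1"
  unfolding ee_def by (rule cis_multiple_2pi)

lemma ee_half: "ee (1/2) = -1"
  unfolding ee_def by (simp add: complex_eq_iff)

definition EE :: "real \<Rightarrow> nat \<Rightarrow> complex" where
  "EE a N = (\<Sum>x<N. complex_of_real (sg x) * ee (a * real x))"

lemma EE_periodic: "EE (a + real t) N = EE a N"
proof -
  have "ee ((a + real t) * real x) = ee (a * real x)" for x
  proof -
    have "(a + real t) * real x = a * real x + real (t*x)" by (simp add: algebra_simps)
    then show ?thesis by (simp add: ee_add ee_int)
  qed
  then show ?thesis unfolding EE_def by simp
qed

definition AA :: "real \<Rightarrow> complex" where
  "AA a = cis (pi*a) * complex_of_real ((2*cos (pi*a) - 1)/2)"
definition BB :: "real \<Rightarrow> complex" where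
  "BB a = cis (pi*a) * complex_of_real ((2*cos (pi*a) + 1)/2)"

lemma cis_2cos: "cis t * complex_of_real (2*cos t) = cis (2*t) + 1"
  by (simp add: complex_eq_iff cos_double_cos sin_double power2_eq_square)

lemma AA_plus_BB: "AA a + BB a = ee (a/2)^2 + 1"
proof -
  have r: "(2*cos (pi*a) - 1)/2 + (2*cos (pi*a) + 1)/2 = 2*cos(pi*a)" by (simp add: field_simps)
  have "AA a + BB a = cis (pi*a) * (complex_of_real ((2*cos (pi*a) - 1)/2) + complex_of_real ((2*cos (pi*a) + 1)/2))"
    unfolding AA_def BB_def by (simp only: distrib_left)
  also have "\<dots> = cis (pi*a) * complex_of_real (2*cos (pi*a))"
    by (simp only: r flip: of_real_add)
  also have "\<dots> = cis (2*(pi*a)) + 1" by (rule cis_2cos)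
  also have "cis (2*(pi*a)) = ee (a/2)^2" unfolding ee_def by (simp add: DeMoivre)
  finally show ?thesis .
qed

lemma AA_minus_BB: "AA a - BB a = - ee (a/2)"
proof -
  have r: "(2*cos (pi*a) - 1)/2 - (2*cos (pi*a) + 1)/2 = -1" by (simp add: field_simps)
  have "AA a - BB a = cis (pi*a) * (complex_of_real ((2*cos (pi*a) - 1)/2) - complex_of_real ((2*cos (pi*a) + 1)/2))"
    unfolding AA_def BB_def by (simp only: right_diff_distrib)
  also have "\<dots> = cis (pi*a) * complex_of_real (-1)"
    by (simp only: r flip: of_real_diff)
  finally show ?thesis unfolding ee_def by simp
qed

lemma EE_Suc: "EE a (Suc N) = EE a N + complex_of_real (sg N) * ee (a * real N)"
  unfolding EE_def by simp

lemma EE_step: "EE a (3*Q) = AA a * EE (3*a/2) (2*Q) + BB a * EE (3*a/2 + 1/2) (2*Q)"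
proof (induction Q)
  case 0 then show ?case by (simp add: EE_def)
next
  case (Suc q)
  define u where "u = ee (3*a*real q)"
  define v where "v = ee (a/2)"
  define s0 where "s0 = complex_of_real (sg (2*q))"
  define s1 where "s1 = complex_of_real (sg (2*q+1))"
  have e1: "ee (a * real (3*q)) = u" unfolding u_def by (simp add: algebra_simps)
  have e2: "ee (a * real (Suc (3*q))) = u * v^2"
  proof -
    have "ee (a * real (Suc (3*q))) = ee (3*a*real q + a/2 + a/2)" by (rule arg_cong[of _ _ ee]) (simp add: algebra_simps)
    then show ?thesis unfolding u_def v_def ee_add by (simp add: power2_eq_square)
  qed
  have e3: "ee (a * real (Suc (Suc (3*q)))) = u * v^4"
  proof -
    have "ee (a * real (Suc (Suc (3*q)))) = ee (3*a*real q + a/2 + a/2 + a/2 + a/2)" by (rule arg_cong[of _ _ ee]) (simp add: algebra_simps)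
    then show ?thesis unfolding u_def v_def ee_add by (simp add: power4_eq_xxxx)
  qed
  have f1: "ee (3*a/2 * real (2*q)) = u" unfolding u_def by (simp add: algebra_simps)
  have f2: "ee (3*a/2 * real (Suc (2*q))) = u * v^3"
  proof -
    have "ee (3*a/2 * real (Suc (2*q))) = ee (3*a*real q + a/2 + a/2 + a/2)" by (rule arg_cong[of _ _ ee]) (simp add: algebra_simps)
    then show ?thesis unfolding u_def v_def ee_add by (simp add: power3_eq_cube)
  qed
  have g1: "ee ((3*a/2 + 1/2) * real (2*q)) = u"
  proof -
    have "ee ((3*a/2 + 1/2) * real (2*q)) = ee (3*a*real q + real q)" by (rule arg_cong[of _ _ ee]) (simp add: algebra_simps)
    then show ?thesis unfolding u_def ee_add by (simp add: ee_int)
  qed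
  have g2: "ee ((3*a/2 + 1/2) * real (Suc (2*q))) = - (u * v^3)"
  proof -
    have "ee ((3*a/2 + 1/2) * real (Suc (2*q))) = ee (3*a*real q + a/2 + a/2 + a/2 + real q + 1/2)"
      by (rule arg_cong[of _ _ ee]) (simp add: algebra_simps)
    then show ?thesis unfolding u_def v_def ee_add by (simp add: ee_int ee_half power3_eq_cube)
  qed
  have s_a: "complex_of_real (sg (3*q)) = s0" unfolding s0_def by (simp add: sg_3q)
  have s_b: "complex_of_real (sg (Suc (3*q))) = s0" unfolding s0_def using sg_3q1[of q] by simp
  have s_c: "complex_of_real (sg (Suc (Suc (3*q)))) = - s1" unfolding s1_def using sg_3q2[of q] by simp
  have s_d: "complex_of_real (sg (Suc (2*q))) = s1" unfolding s1_def by simp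
  have L: "EE a (3 * Suc q) = EE a (3*q) + s0*u + s0*(u*v^2) - s1*(u*v^4)"
  proof -
    have "3 * Suc q = Suc (Suc (Suc (3*q)))" by simp
    then show ?thesis by (simp only: EE_Suc e1 e2 e3 s_a s_b s_c) simp
  qed
  have R1: "EE (3*a/2) (2 * Suc q) = EE (3*a/2) (2*q) + s0*u + s1*(u*v^3)"
  proof -
    have "2 * Suc q = Suc (Suc (2*q))" by simp
    then show ?thesis by (simp only: EE_Suc f1 f2 s_d flip: s0_def)
  qed
  have R2: "EE (3*a/2 + 1/2) (2 * Suc q) = EE (3*a/2 + 1/2) (2*q) + s0*u - s1*(u*v^3)"
  proof -
    have "2 * Suc q = Suc (Suc (2*q))" by simp
    then show ?thesis by (simp only: EE_Suc g1 g2 s_d flip: s0_def) simp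
  qed
  have key: "AA a * (s0*u + s1*(u*v^3)) + BB a * (s0*u - s1*(u*v^3))
      = s0*u*(AA a + BB a) + s1*(u*v^3)*(AA a - BB a)" by (simp add: algebra_simps)
  also have "\<dots> = s0*u + s0*(u*v^2) - s1*(u*v^4)"
    unfolding AA_plus_BB AA_minus_BB v_def[symmetric] by (simp add: algebra_simps power_numeral_reduce)
  finally have key': "AA a * (s0*u + s1*(u*v^3)) + BB a * (s0*u - s1*(u*v^3)) = s0*u + s0*(u*v^2) - s1*(u*v^4)" .
  show ?case unfolding L R1 R2 using Suc.IH key' by (simp add: algebra_simps)
qed



lemma EE_modK:
  assumes "0 < K"
  shows "EE (real x / real K) N = EE (real (x mod K) / real K) N"
proof -
  have "real x = real (x mod K) + real K * real (x div K)"
    by (metis of_nat_add of_nat_mult mod_mult_div_eq add.commute mult.commute)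
  then have "real x / real K = real (x mod K) / real K + real (x div K)"
    using assms by (simp add: field_simps)
  then show ?thesis by (simp add: EE_periodic)
qed

lemma regroup:
  fixes f :: "nat \<Rightarrow> complex"
  assumes "finite S" "finite T" "\<And>b. b \<in> S \<Longrightarrow> g b \<in> T"
  shows "(\<Sum>b\<in>S. f b * F (g b)) = (\<Sum>y\<in>T. (\<Sum>b\<in>{b\<in>S. g b = y}. f b) * F y)"
proof -
  have gs: "g ` S \<subseteq> T" using assms(3) by auto
  have "(\<Sum>b\<in>S. f b * F (g b)) = (\<Sum>y\<in>T. \<Sum>b\<in>{b\<in>S. g b = y}. f b * F (g b))"
    using sum.group[OF assms(1,2) gs, of "\<lambda>b. f b * F (g b)"] by simp
  also have "\<dots> = (\<Sum>y\<in>T. (\<Sum>b\<in>{b\<in>S. g b = y}. f b) * F y)"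
    by (rule sum.cong) (simp_all add: sum_distrib_right)
  finally show ?thesis .
qed

definition TT :: "nat \<Rightarrow> (nat \<Rightarrow> complex) \<Rightarrow> nat \<Rightarrow> complex" where
  "TT m c y = (\<Sum>b\<in>{b\<in>{..<2^m}. (3*b) mod 2^Suc m = y}. c b * AA (real b / 2^m))
            + (\<Sum>b\<in>{b\<in>{..<2^m}. (3*b + 2^m) mod 2^Suc m = y}. c b * BB (real b / 2^m))"

lemma TT_step:
  "(\<Sum>b<2^m. c b * EE (real b / 2^m) (3*Q))
   = (\<Sum>y<2^Suc m. TT m c y * EE (real y / 2^Suc m) (2*Q))"
proof -
  define K :: nat where "K = 2^Suc m"
  have K0: "0 < K" unfolding K_def by simp
  have rK: "real K = 2 * 2^m" unfolding K_def by simp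
  have a1: "EE (3 * (real b / 2^m) / 2) (2*Q) = EE (real ((3*b) mod K) / real K) (2*Q)" for b
  proof -
    have e: "3 * (real b / 2^m) / 2 = real (3*b) / real K" unfolding rK by simp
    show ?thesis unfolding e by (rule EE_modK[OF K0])
  qed
  have a2: "EE (3 * (real b / 2^m) / 2 + 1/2) (2*Q) = EE (real ((3*b + 2^m) mod K) / real K) (2*Q)" for b
  proof -
    have e: "3 * (real b / 2^m) / 2 + 1/2 = real (3*b + 2^m) / real K" unfolding rK by (simp add: field_simps)
    show ?thesis unfolding e by (rule EE_modK[OF K0])
  qed
  have "(\<Sum>b<2^m. c b * EE (real b / 2^m) (3*Q))
      = (\<Sum>b<2^m. (c b * AA (real b / 2^m)) * EE (real ((3*b) mod K) / real K) (2*Q))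
      + (\<Sum>b<2^m. (c b * BB (real b / 2^m)) * EE (real ((3*b + 2^m) mod K) / real K) (2*Q))"
    unfolding EE_step a1 a2 by (simp add: algebra_simps sum.distrib)
  also have "(\<Sum>b<2^m. (c b * AA (real b / 2^m)) * EE (real ((3*b) mod K) / real K) (2*Q))
     = (\<Sum>y<K. (\<Sum>b\<in>{b\<in>{..<2^m}. (3*b) mod K = y}. c b * AA (real b / 2^m)) * EE (real y / real K) (2*Q))"
    by (rule regroup[where F = "\<lambda>y. EE (real y / real K) (2*Q)" and g = "\<lambda>b. (3*b) mod K"])
       (auto simp: K0)
  also have "(\<Sum>b<2^m. (c b * BB (real b / 2^m)) * EE (real ((3*b + 2^m) mod K) / real K) (2*Q))
     = (\<Sum>y<K. (\<Sum>b\<in>{b\<in>{..<2^m}. (3*b + 2^m) mod K = y}. c b * BB (real b / 2^m)) * EE (real y / real K) (2*Q))"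
    by (rule regroup[where F = "\<lambda>y. EE (real y / real K) (2*Q)" and g = "\<lambda>b. (3*b + 2^m) mod K"])
       (auto simp: K0)
  finally show ?thesis unfolding TT_def K_def by (simp add: sum.distrib algebra_simps)
qed



lemma f0_inj:
  assumes "b < (2::nat)^m" "b' < 2^m" "(3*b) mod 2^Suc m = (3*b') mod 2^Suc m"
  shows "b = b'"
proof -
  have "[3*b = 3*b'] (mod 2^Suc m)" using assms(3) by (simp add: cong_def)
  then have "[b = b'] (mod 2^Suc m)" by (subst (asm) cong_mult_lcancel_nat) simp_all
  then show ?thesis using assms(1,2) by (simp add: cong_def)
qed

lemma f1_inj:
  assumes "b < (2::nat)^m" "b' < 2^m" "(3*b + 2^m) mod 2^Suc m = (3*b' + 2^m) mod 2^Suc m"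
  shows "b = b'"
proof -
  have "[3*b + 2^m = 3*b' + 2^m] (mod 2^Suc m)" using assms(3) by (simp add: cong_def)
  then have "[3*b = 3*b'] (mod 2^Suc m)" by (simp add: cong_add_rcancel_nat)
  then have "[b = b'] (mod 2^Suc m)" by (subst (asm) cong_mult_lcancel_nat) simp_all
  then show ?thesis using assms(1,2) by (simp add: cong_def)
qed

lemma f01_disj:
  assumes "b < (2::nat)^m" "b' < 2^m" "(3*b) mod 2^Suc m = (3*b' + 2^m) mod 2^Suc m"
  shows False
proof -
  have dv: "(2::nat)^m dvd 2^Suc m" by simp
  have "(3*b) mod 2^Suc m mod 2^m = (3*b' + 2^m) mod 2^Suc m mod 2^m" using assms(3) by simp
  then have "(3*b) mod 2^m = (3*b' + 2^m) mod 2^m" unfolding mod_mod_cancel[OF dv] .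
  then have "(3*b) mod 2^m = (3*b') mod 2^m" by simp
  then have "[3*b = 3*b'] (mod 2^m)" by (simp add: cong_def)
  then have "[b = b'] (mod 2^m)" by (subst (asm) cong_mult_lcancel_nat) simp_all
  then have "b = b'" using assms(1,2) by (simp add: cong_def)
  with assms(3) have "[3*b + 0 = 3*b + 2^m] (mod 2^Suc m)" by (simp add: cong_def)
  then have "[0 = (2::nat)^m] (mod 2^Suc m)" by (simp only: cong_add_lcancel_nat)
  then have "(2::nat)^Suc m dvd 2^m" by (simp add: cong_def)
  then have "(2::nat)^Suc m \<le> 2^m" by (rule dvd_imp_le) simp
  then show False by simp
qed

lemma TT_f0: "b < 2^m \<Longrightarrow> TT m c ((3*b) mod 2^Suc m) = c b * AA (real b / 2^m)"
proof -
  assume b: "b < 2^m"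
  have s1: "{b'\<in>{..<2^m}. (3*b') mod 2^Suc m = (3*b) mod 2^Suc m} = {b}"
    using f0_inj[OF _ b] b by auto
  have s2: "{b'\<in>{..<2^m}. (3*b' + 2^m) mod 2^Suc m = (3*b) mod 2^Suc m} = {}"
    using f01_disj[OF b] by fastforce
  show ?thesis unfolding TT_def s1 s2 by simp
qed

lemma TT_f1: "b < 2^m \<Longrightarrow> TT m c ((3*b + 2^m) mod 2^Suc m) = c b * BB (real b / 2^m)"
proof -
  assume b: "b < 2^m"
  have s1: "{b'\<in>{..<2^m}. (3*b') mod 2^Suc m = (3*b + 2^m) mod 2^Suc m} = {}"
    using f01_disj[OF _ b] by fastforce
  have s2: "{b'\<in>{..<2^m}. (3*b' + 2^m) mod 2^Suc m = (3*b + 2^m) mod 2^Suc m} = {b}"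
    using f1_inj[OF _ b] b by auto
  show ?thesis unfolding TT_def s1 s2 by simp
qed

lemma TT_other:
  assumes "y \<notin> (\<lambda>b. (3*b) mod 2^Suc m) ` {..<2^m}" "y \<notin> (\<lambda>b. (3*b + 2^m) mod 2^Suc m) ` {..<2^m}"
  shows "TT m c y = 0"
proof -
  have s1: "{b'\<in>{..<2^m}. (3*b') mod 2^Suc m = y} = {}" using assms(1) by auto
  have s2: "{b'\<in>{..<2^m}. (3*b' + 2^m) mod 2^Suc m = y} = {}" using assms(2) by auto
  show ?thesis unfolding TT_def s1 s2 by simp
qed

lemma per_mod:
  assumes per: "\<And>x t. w (x + real t) = (w x :: real)"
  shows "w (real (x mod 2^Suc m) / 2^Suc m) = w (real x / 2^Suc m)"
proof -
  have "real x = real (x mod 2^Suc m) + 2^Suc m * real (x div 2^Suc m)"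
    by (metis (mono_tags, lifting) of_nat_add of_nat_mult of_nat_numeral of_nat_power mod_mult_div_eq add.commute mult.commute)
  then have "real x / 2^Suc m = real (x mod 2^Suc m) / 2^Suc m + real (x div 2^Suc m)"
    by (simp add: field_simps)
  then show ?thesis using per by simp
qed

lemma TT_norm:
  assumes per: "\<And>x t. w (x + real t) = (w x :: real)"
  shows "(\<Sum>y<2^Suc m. cmod (TT m c y)^2 * w (real y / 2^Suc m))
       = (\<Sum>b<2^m. cmod (c b)^2 * (cmod (AA (real b / 2^m))^2 * w (3 * real b / 2^Suc m)
            + cmod (BB (real b / 2^m))^2 * w ((3 * real b + 2^m) / 2^Suc m)))"
proof -
  define S :: "nat set" where "S = {..<2^m}"
  define f0 where "f0 = (\<lambda>b::nat. (3*b) mod 2^Suc m)"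
  define f1 where "f1 = (\<lambda>b::nat. (3*b + 2^m) mod 2^Suc m)"
  define F where "F = (\<lambda>y. cmod (TT m c y)^2 * w (real y / 2^Suc m))"
  have sub: "f0 ` S \<union> f1 ` S \<subseteq> {..<2^Suc m}" unfolding f0_def f1_def by auto
  have zero: "\<forall>y\<in>{..<2^Suc m} - (f0 ` S \<union> f1 ` S). F y = 0"
    unfolding F_def using TT_other unfolding f0_def f1_def S_def by auto
  have "(\<Sum>y<2^Suc m. F y) = (\<Sum>y\<in>f0 ` S \<union> f1 ` S. F y)"
    by (rule sum.mono_neutral_right[OF _ sub zero]) simp
  also have "\<dots> = (\<Sum>y\<in>f0 ` S. F y) + (\<Sum>y\<in>f1 ` S. F y)"
    by (rule sum.union_disjoint) (auto simp: S_def f0_def f1_def dest: f01_disj)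
  also have "(\<Sum>y\<in>f0 ` S. F y) = (\<Sum>b\<in>S. F (f0 b))"
    by (rule sum.reindex_cong[where l = f0]) (auto simp: inj_on_def S_def f0_def dest: f0_inj)
  also have "(\<Sum>y\<in>f1 ` S. F y) = (\<Sum>b\<in>S. F (f1 b))"
    by (rule sum.reindex_cong[where l = f1]) (auto simp: inj_on_def S_def f1_def dest: f1_inj)
  also have "(\<Sum>b\<in>S. F (f0 b)) = (\<Sum>b\<in>S. cmod (c b)^2 * cmod (AA (real b / 2^m))^2 * w (3 * real b / 2^Suc m))"
  proof (rule sum.cong)
    fix b assume "b \<in> S"
    then have b: "b < 2^m" by (simp add: S_def)
    have "w (real (f0 b) / 2^Suc m) = w (real (3*b) / 2^Suc m)" unfolding f0_def by (rule per_mod[OF per])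
    then show "F (f0 b) = cmod (c b)^2 * cmod (AA (real b / 2^m))^2 * w (3 * real b / 2^Suc m)"
      unfolding F_def using TT_f0[OF b, of c] by (simp add: f0_def norm_mult power_mult_distrib)
  qed simp
  also have "(\<Sum>b\<in>S. F (f1 b)) = (\<Sum>b\<in>S. cmod (c b)^2 * cmod (BB (real b / 2^m))^2 * w ((3 * real b + 2^m) / 2^Suc m))"
  proof (rule sum.cong)
    fix b assume "b \<in> S"
    then have b: "b < 2^m" by (simp add: S_def)
    have "w (real (f1 b) / 2^Suc m) = w (real (3*b + 2^m) / 2^Suc m)" unfolding f1_def by (rule per_mod[OF per])
    then show "F (f1 b) = cmod (c b)^2 * cmod (BB (real b / 2^m))^2 * w ((3 * real b + 2^m) / 2^Suc m)"
      unfolding F_def using TT_f1[OF b, of c] by (simp add: f1_def norm_mult power_mult_distrib)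
  qed simp
  finally show ?thesis unfolding F_def S_def by (simp add: sum.distrib algebra_simps)
qed



lemma AA_sq: "cmod (AA x)^2 = ((2*cos(pi*x) - 1)/2)^2"
  unfolding AA_def norm_mult norm_of_real by (simp add: power_divide)

lemma BB_sq: "cmod (BB x)^2 = ((2*cos(pi*x) + 1)/2)^2"
  unfolding BB_def norm_mult norm_of_real by (simp add: power_divide)

definition w1 :: "real \<Rightarrow> real" where "w1 x = cmod (AA x)^2 + cmod (BB x)^2"

lemma w1_eq: "w1 x = 2 * cos (pi*x)^2 + 1/2"
  unfolding w1_def AA_sq BB_sq by (simp add: field_simps power2_eq_square)

lemma cos_sq_per: "cos (pi*(x + real t))^2 = cos (pi*x)^2"
proof -
  have "cos (pi*(x + real t)) = cos (pi*x) * cos (real t * pi) - sin (pi*x) * sin (real t * pi)"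
    by (simp add: distrib_left cos_add mult.commute)
  also have "\<dots> = cos (pi*x) * (-1)^t" by (simp add: sin_npi cos_npi)
  moreover have "((-1::real)^t)^2 = 1" by (induct t) (simp_all add: power2_eq_square)
  ultimately show ?thesis by (simp add: power_mult_distrib)
qed

lemma w1_per: "w1 (x + real t) = w1 x"
  unfolding w1_eq cos_sq_per ..

lemma tp: fixes c C :: real assumes hC: "C^2 = (1 + 4*c^3 - 3*c)/2"
  shows "((2*c-1)/2)^2 * (2*C^2+1/2) + ((2*c+1)/2)^2 * (2*(1-C^2)+1/2) = 3/4 + 9*c^2 - 8*c^4"
  unfolding hC by (simp add: field_simps power2_eq_square power3_eq_cube power4_eq_xxxx)

lemma tq: fixes c :: real shows "3/4 + 9*c^2 - 8*c^4 \<le> 4"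
proof -
  have "0 \<le> 8*(c^2 - 9/16)^2" by simp
  then show ?thesis by (simp add: power2_eq_square power4_eq_xxxx algebra_simps)
qed

lemma two_pt: "cmod (AA x)^2 * w1 (3*x/2) + cmod (BB x)^2 * w1 (3*x/2 + 1/2) \<le> 4"
proof -
  define t where "t = pi*x/2"
  define c where "c = cos (2*t)"
  define C where "C = cos (3*t)"
  have px: "pi*x = 2*t" unfolding t_def by simp
  have p3: "pi*(3*x/2) = 3*t" unfolding t_def by simp
  have p4: "pi*(3*x/2 + 1/2) = 3*t + pi/2" unfolding t_def by (simp add: field_simps)
  have hC: "C^2 = (1 + 4*c^3 - 3*c)/2"
  proof -
    have "cos (2*(3*t)) = 2*C^2 - 1" unfolding C_def by (rule cos_double_cos)
    moreover have "cos (2*(3*t)) = 4*c^3 - 3*c"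
    proof -
      have "cos (2*(3*t)) = cos (3*(2*t))" by (simp add: mult.left_commute)
      also have "\<dots> = 4*cos (2*t)^3 - 3*cos (2*t)" by (rule cos_treble_cos)
      finally show ?thesis unfolding c_def .
    qed
    ultimately show ?thesis by simp
  qed
  have w1a: "w1 (3*x/2) = 2*C^2 + 1/2" unfolding w1_eq p3 C_def ..
  have w1b: "w1 (3*x/2 + 1/2) = 2*(1 - C^2) + 1/2"
  proof -
    have "cos (3*t + pi/2) = - sin (3*t)" by (simp add: cos_add)
    then have "cos (3*t + pi/2)^2 = 1 - C^2" unfolding C_def by (simp add: sin_squared_eq)
    then show ?thesis unfolding w1_eq p4 by simp
  qed
  have "cmod (AA x)^2 * w1 (3*x/2) + cmod (BB x)^2 * w1 (3*x/2 + 1/2)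
      = ((2*c-1)/2)^2 * (2*C^2+1/2) + ((2*c+1)/2)^2 * (2*(1-C^2)+1/2)"
    unfolding AA_sq BB_sq w1a w1b px c_def ..
  also have "\<dots> = 3/4 + 9*c^2 - 8*c^4" by (rule tp[OF hC])
  also have "\<dots> \<le> 4" by (rule tq)
  finally show ?thesis .
qed

lemma TT2_norm:
  "(\<Sum>y<2^Suc (Suc m). cmod (TT (Suc m) (TT m c) y)^2) \<le> 4 * (\<Sum>b<2^m. cmod (c b)^2)"
proof -
  have "(\<Sum>y<2^Suc (Suc m). cmod (TT (Suc m) (TT m c) y)^2)
      = (\<Sum>y<2^Suc (Suc m). cmod (TT (Suc m) (TT m c) y)^2 * (\<lambda>_. 1::real) (real y / 2^Suc (Suc m)))"
    by simp
  also have "\<dots> = (\<Sum>b<2^Suc m. cmod (TT m c b)^2 * w1 (real b / 2^Suc m))"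
    by (subst TT_norm) (simp_all add: w1_def)
  also have "\<dots> = (\<Sum>b<2^m. cmod (c b)^2 * (cmod (AA (real b / 2^m))^2 * w1 (3 * real b / 2^Suc m)
            + cmod (BB (real b / 2^m))^2 * w1 ((3 * real b + 2^m) / 2^Suc m)))"
    by (rule TT_norm) (rule w1_per)
  also have "\<dots> \<le> (\<Sum>b<2^m. cmod (c b)^2 * 4)"
  proof (rule sum_mono)
    fix b assume "b \<in> {..<(2::nat)^m}"
    define x where "x = real b / 2^m"
    have e1: "3 * real b / 2^Suc m = 3*x/2" unfolding x_def by simp
    have e2: "(3 * real b + 2^m) / 2^Suc m = 3*x/2 + 1/2" unfolding x_def by (simp add: field_simps)
    show "cmod (c b)^2 * (cmod (AA (real b / 2^m))^2 * w1 (3 * real b / 2^Suc m)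
            + cmod (BB (real b / 2^m))^2 * w1 ((3 * real b + 2^m) / 2^Suc m)) \<le> cmod (c b)^2 * 4"
      unfolding e1 e2 x_def[symmetric] by (rule mult_left_mono[OF two_pt]) simp
  qed
  finally show ?thesis by (simp add: sum_distrib_left mult.commute)
qed

fun iterT :: "nat \<Rightarrow> nat \<Rightarrow> (nat \<Rightarrow> complex) \<Rightarrow> nat \<Rightarrow> complex" where
  "iterT m 0 c = c"
| "iterT m (Suc j) c = TT (m + j) (iterT m j c)"

lemma iter_eq:
  "(\<Sum>b<2^m. c b * EE (real b / 2^m) (3^j * Q))
   = (\<Sum>b<2^(m+j). iterT m j c b * EE (real b / 2^(m+j)) (2^j * Q))"
proof (induction j arbitrary: Q)
  case 0 then show ?case by simp
next
  case (Suc j)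
  have "(\<Sum>b<2^m. c b * EE (real b / 2^m) (3^Suc j * Q))
      = (\<Sum>b<2^m. c b * EE (real b / 2^m) (3^j * (3*Q)))" by (simp add: mult.assoc mult.left_commute)
  also have "\<dots> = (\<Sum>b<2^(m+j). iterT m j c b * EE (real b / 2^(m+j)) (3 * (2^j * Q)))"
    unfolding Suc.IH by (simp add: mult.left_commute)
  also have "\<dots> = (\<Sum>y<2^Suc (m+j). TT (m+j) (iterT m j c) y * EE (real y / 2^Suc (m+j)) (2 * (2^j * Q)))"
    by (rule TT_step)
  finally show ?case by (simp add: mult.assoc)
qed

lemma iter_norm:
  "(\<Sum>b<2^(m+2*i). cmod (iterT m (2*i) c b)^2) \<le> 4^i * (\<Sum>b<2^m. cmod (c b)^2)"
proof (induction i)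
  case 0 then show ?case by simp
next
  case (Suc i)
  have e: "iterT m (2 * Suc i) c = TT (Suc (m + 2*i)) (TT (m + 2*i) (iterT m (2*i) c))"
    by (simp add: numeral_2_eq_2)
  have e2: "m + 2 * Suc i = Suc (Suc (m + 2*i))" by simp
  have "(\<Sum>b<2^(m+2*Suc i). cmod (iterT m (2*Suc i) c b)^2) \<le> 4 * (\<Sum>b<2^(m+2*i). cmod (iterT m (2*i) c b)^2)"
    unfolding e e2 by (rule TT2_norm)
  also have "\<dots> \<le> 4 * (4^i * (\<Sum>b<2^m. cmod (c b)^2))" using Suc.IH by simp
  finally show ?case by simp
qed



lemma orth:
  assumes K: "0 < K"
  shows "(\<Sum>b<K. ee (real b * of_int d / real K)) = (if int K dvd d then of_nat K else 0)"
proof -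
  define z where "z = ee (of_int d / real K)"
  have zb: "ee (real b * of_int d / real K) = z^b" for b
    unfolding z_def ee_def DeMoivre by (rule arg_cong[of _ _ cis]) simp
  show ?thesis
  proof (cases "int K dvd d")
    case True
    then obtain q where q: "d = int K * q" by blast
    have "of_int d / real K = of_int q" using K unfolding q by simp
    then have "z = 1" unfolding z_def by (simp add: ee_int)
    then show ?thesis unfolding zb using True by simp
  next
    case False
    have z1: "z \<noteq> 1"
    proof
      assume "z = 1"
      then have "cos (2*pi*(of_int d / real K)) = 1" unfolding z_def ee_def
        by (metis Re_complex_of_real cis.sel(1) complex_of_real_def one_complex.sel(1))
      then obtain n :: int where n: "2*pi*(of_int d / real K) = real_of_int n * 2 * pi"
        using cos_one_2pi_int by blast
      then have "2*pi*(of_int d / real K - real_of_int n) = 0" by (simp add: algebra_simps)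
      then have "of_int d / real K = real_of_int n" by simp
      then have "real_of_int d = real_of_int n * real K" using K by (simp add: field_simps)
      then have "d = n * int K" by (metis of_int_eq_iff of_int_mult of_int_of_nat_eq)
      then show False using False by simp
    qed
    have zK: "z^K = 1"
    proof -
      have "z^K = cis (real K * (2*pi*(of_int d / real K)))" unfolding z_def ee_def DeMoivre ..
      also have "real K * (2*pi*(of_int d / real K)) = 2*pi*of_int d" using K by simp
      also have "cis (2*pi*of_int d) = 1" by (rule cis_multiple_2pi) simp
      finally show ?thesis .
    qed
    have "(\<Sum>b<K. z^b) = 0" using geometric_sum[OF z1, of K] zK by simp
    then show ?thesis unfolding zb using False by simp
  qed
qed

lemma sg_abs: "\<bar>sg x\<bar> = 1"
  unfolding sg_def by simp

lemma cnt_mult: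
  assumes "0 < K" "r < K"
  shows "card {y. y < q*K \<and> y mod K = r} = q"
proof -
  have "{y. y < q*K \<and> y mod K = r} = (\<lambda>j. j*K + r) ` {..<q}"
  proof (intro set_eqI iffI)
    fix y assume y: "y \<in> {y. y < q*K \<and> y mod K = r}"
    then have "y = (y div K)*K + r" using div_mult_mod_eq[of y K] by simp
    moreover have "y div K < q" using y assms(1) by (simp add: less_mult_imp_div_less)
    ultimately show "y \<in> (\<lambda>j. j*K + r) ` {..<q}" by blast
  next
    fix y assume "y \<in> (\<lambda>j. j*K + r) ` {..<q}"
    then obtain j where j: "j < q" "y = j*K + r" by blast
    have "j*K + r < (j+1)*K" using assms(2) by simp
    also have "\<dots> \<le> q*K" using j(1) by (intro mult_right_mono) simp_all
    finally show "y \<in> {y. y < q*K \<and> y mod K = r}" using j assms(2) by simp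
  qed
  moreover have "inj_on (\<lambda>j. j*K + r) {..<q}" using assms(1) by (simp add: inj_on_def)
  ultimately show ?thesis by (simp add: card_image)
qed

lemma cnt_bounds:
  assumes K: "0 < K" and r: "r < K"
  shows "real N / real K - 1 \<le> real (card {y. y < N \<and> y mod K = r})"
    and "real (card {y. y < N \<and> y mod K = r}) \<le> real N / real K + 1"
proof -
  define q where "q = N div K"
  have "q*K \<le> N" unfolding q_def using div_mult_mod_eq[of N K] by linarith
  have e1: "N = q*K + N mod K" unfolding q_def by simp
  have e2: "N mod K < K" using K by simp
  have e3: "(q+1)*K = q*K + K" by simp
  have "N < (q+1)*K" using e1 e2 e3 by linarith
  have "card {y. y < q*K \<and> y mod K = r} \<le> card {y. y < N \<and> y mod K = r}"
    using \<open>q*K \<le> N\<close> by (intro card_mono) auto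
  then have lo: "q \<le> card {y. y < N \<and> y mod K = r}" using cnt_mult[OF K r] by simp
  have "card {y. y < N \<and> y mod K = r} \<le> card {y. y < (q+1)*K \<and> y mod K = r}"
    using \<open>N < (q+1)*K\<close> by (intro card_mono) auto
  then have hi: "card {y. y < N \<and> y mod K = r} \<le> q + 1" using cnt_mult[OF K r, of "q+1"] by linarith
  have Kr: "0 < real K" using K by simp
  have "real q * real K \<le> real N" using \<open>q*K \<le> N\<close> by (simp only: of_nat_mult[symmetric] of_nat_le_iff)
  then have rq1: "real q \<le> real N / real K" by (simp add: pos_le_divide_eq[OF Kr])
  have "real N < real ((q+1)*K)" using \<open>N < (q+1)*K\<close> by (simp only: of_nat_less_iff)
  then have "real N < (real q + 1) * real K" by (simp add: algebra_simps)
  then have rq2: "real N / real K < real q + 1" by (simp add: pos_divide_less_eq[OF Kr])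
  show "real N / real K - 1 \<le> real (card {y. y < N \<and> y mod K = r})" using lo rq2 by linarith
  show "real (card {y. y < N \<and> y mod K = r}) \<le> real N / real K + 1" using hi rq1 by linarith
qed

lemma dvd_iff_mod: "0 < K \<Longrightarrow> (int K dvd (int x - int y)) = (y mod K = x mod K)"
  by (metis cong_iff_dvd_diff cong_int_iff cong_def)

lemma parseval:
  assumes K: "0 < K"
  shows "(\<Sum>b<K. cmod (EE (real b / real K) N)^2) \<le> real N * (real N + real K)"
proof -
  define R where "R = (\<Sum>x<N. \<Sum>y<N. sg x * sg y * (if int K dvd (int x - int y) then real K else 0))"
  have cnjE: "cnj (EE a N) = (\<Sum>y<N. complex_of_real (sg y) * ee (- (a * real y)))" for a
    unfolding EE_def ee_def by (simp add: cis_cnj)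
  have prod: "EE (real b / real K) N * cnj (EE (real b / real K) N)
     = (\<Sum>x<N. \<Sum>y<N. complex_of_real (sg x * sg y) * ee (real b * of_int (int x - int y) / real K))" for b
  proof -
    have "EE (real b / real K) N * cnj (EE (real b / real K) N)
       = (\<Sum>x<N. \<Sum>y<N. (complex_of_real (sg x) * ee (real b / real K * real x)) * (complex_of_real (sg y) * ee (- (real b / real K * real y))))"
      unfolding cnjE unfolding EE_def sum_product ..
    also have "\<dots> = (\<Sum>x<N. \<Sum>y<N. complex_of_real (sg x * sg y) * ee (real b * of_int (int x - int y) / real K))"
    proof (intro sum.cong refl)
      fix x y
      have "ee (real b * of_int (int x - int y) / real K) = ee (real b / real K * real x + (- (real b / real K * real y)))"
        by (rule arg_cong[of _ _ ee]) (use K in \<open>simp add: field_simps\<close>)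
      then show "(complex_of_real (sg x) * ee (real b / real K * real x)) * (complex_of_real (sg y) * ee (- (real b / real K * real y)))
          = complex_of_real (sg x * sg y) * ee (real b * of_int (int x - int y) / real K)"
        unfolding ee_add by (simp add: algebra_simps)
    qed
    finally show ?thesis .
  qed
  have "complex_of_real (\<Sum>b<K. cmod (EE (real b / real K) N)^2)
      = (\<Sum>b<K. EE (real b / real K) N * cnj (EE (real b / real K) N))"
    by (simp only: of_real_sum complex_norm_square)
  also have "\<dots> = (\<Sum>b<K. \<Sum>x<N. \<Sum>y<N. complex_of_real (sg x * sg y) * ee (real b * of_int (int x - int y) / real K))"
    unfolding prod ..
  also have "\<dots> = (\<Sum>x<N. \<Sum>y<N. complex_of_real (sg x * sg y) * (\<Sum>b<K. ee (real b * of_int (int x - int y) / real K)))"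
    by (simp add: sum_distrib_left sum.swap[of _ "{..<K}"])
  also have "\<dots> = complex_of_real R"
    unfolding orth[OF K] R_def of_real_sum by (intro sum.cong refl) auto
  finally have eqR: "(\<Sum>b<K. cmod (EE (real b / real K) N)^2) = R" by (simp only: of_real_eq_iff)
  have "R \<le> (\<Sum>x<N. \<Sum>y<N. (if int K dvd (int x - int y) then real K else 0))"
    unfolding R_def
  proof (intro sum_mono)
    fix x y
    have "sg x * sg y \<le> 1" using sg_abs[of x] sg_abs[of y]
      by (metis abs_le_D1 abs_mult mult_1 order_refl)
    then show "sg x * sg y * (if int K dvd (int x - int y) then real K else 0) \<le> (if int K dvd (int x - int y) then real K else 0)"
      using mult_right_mono[of "sg x * sg y" 1 "real K"] by simp
  qed
  also have "\<dots> = (\<Sum>x<N. real K * real (card {y. y < N \<and> y mod K = x mod K}))"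
  proof (rule sum.cong[OF refl])
    fix x
    have "(\<Sum>y<N. (if int K dvd (int x - int y) then real K else 0)) = (\<Sum>y<N. (if y mod K = x mod K then real K else 0))"
      by (simp add: dvd_iff_mod[OF K])
    also have "\<dots> = (\<Sum>y\<in>{y\<in>{..<N}. y mod K = x mod K}. real K)"
      by (rule sum.inter_filter[symmetric]) simp
    also have "{y\<in>{..<N}. y mod K = x mod K} = {y. y < N \<and> y mod K = x mod K}" by auto
    finally show "(\<Sum>y<N. (if int K dvd (int x - int y) then real K else 0)) = real K * real (card {y. y < N \<and> y mod K = x mod K})"
      by simp
  qed
  also have "\<dots> \<le> (\<Sum>x<N. real K * (real N / real K + 1))"
    by (intro sum_mono mult_left_mono cnt_bounds(2)[OF K]) (simp_all add: K)
  also have "\<dots> = real N * (real N + real K)" using K by (simp add: field_simps)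
  finally show ?thesis unfolding eqR .
qed



definition DD :: "nat \<Rightarrow> int \<Rightarrow> nat \<Rightarrow> real" where
  "DD n k N = (\<Sum>x\<in>{x. x < N \<and> [int x = k] (mod 2^n)}. sg x)"

definition c0 :: "nat \<Rightarrow> int \<Rightarrow> nat \<Rightarrow> complex" where
  "c0 n k b = ee (- (real b * of_int k / 2^n)) / 2^n"

lemma cong_iff_dvd2: "[int x = k] (mod 2^n) \<longleftrightarrow> int ((2::nat)^n) dvd (int x - k)"
  by (simp add: cong_iff_dvd_diff)

lemma DD_fourier: "complex_of_real (DD n k N) = (\<Sum>b<2^n. c0 n k b * EE (real b / 2^n) N)"
proof -
  define K :: nat where "K = 2^n"
  have K: "0 < K" unfolding K_def by simp
  have rK: "real K = 2^n" unfolding K_def by simp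
  have inner: "(\<Sum>b<K. c0 n k b * ee (real b / 2^n * real x))
        = (if [int x = k] (mod 2^n) then 1 else 0)" for x
  proof -
    have "c0 n k b * ee (real b / 2^n * real x) = ee (real b * of_int (int x - k) / real K) / 2^n" for b
    proof -
      have "ee (real b * of_int (int x - k) / real K) = ee (- (real b * of_int k / 2^n) + real b / 2^n * real x)"
        by (rule arg_cong[of _ _ ee]) (simp add: rK field_simps)
      then show ?thesis unfolding c0_def ee_add by simp
    qed
    then have "(\<Sum>b<K. c0 n k b * ee (real b / 2^n * real x))
        = (\<Sum>b<K. ee (real b * of_int (int x - k) / real K)) / 2^n"
      by (simp add: sum_divide_distrib)
    also have "\<dots> = (if [int x = k] (mod 2^n) then 1 else 0)"
      by (subst orth[OF K]) (simp add: cong_iff_dvd2 K_def)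
    finally show ?thesis .
  qed
  have "(\<Sum>b<2^n. c0 n k b * EE (real b / 2^n) N)
      = (\<Sum>x<N. complex_of_real (sg x) * (\<Sum>b<K. c0 n k b * ee (real b / 2^n * real x)))"
    unfolding EE_def K_def by (simp add: sum_distrib_left sum.swap[of _ "{..<N}"] algebra_simps)
  also have "\<dots> = (\<Sum>x<N. complex_of_real (if [int x = k] (mod 2^n) then sg x else 0))"
    unfolding inner by (intro sum.cong refl) simp
  also have "\<dots> = complex_of_real (\<Sum>x<N. if [int x = k] (mod 2^n) then sg x else 0)"
    by (simp only: of_real_sum)
  also have "(\<Sum>x<N. if [int x = k] (mod 2^n) then sg x else 0) = (\<Sum>x\<in>{x\<in>{..<N}. [int x = k] (mod 2^n)}. sg x)"
    by (rule sum.inter_filter[symmetric]) simp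
  also have "{x\<in>{..<N}. [int x = k] (mod 2^n)} = {x. x < N \<and> [int x = k] (mod 2^n)}" by auto
  finally show ?thesis unfolding DD_def by simp
qed

lemma amgm: fixes a b l :: real assumes "0 < l" shows "a * b \<le> (l * a^2 + b^2 / l) / 2"
proof -
  have "0 \<le> (l*a - b)^2" by simp
  then have "2 * l * (a * b) \<le> l^2 * a^2 + b^2" by (simp add: power2_eq_square algebra_simps)
  then show ?thesis using assms by (simp add: field_simps power2_eq_square)
qed

lemma DD_bound9: "\<bar>DD n k (9^i * Q)\<bar> \<le> 8^i * (real Q + 2^n)"
proof -
  define M where "M = n + 2*i"
  define c where "c = iterT n (2*i) (c0 n k)"
  define E where "E = (\<lambda>b. EE (real b / 2^M) (4^i * Q))"
  define l :: real where "l = 2^i * (real Q + 2^n)"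
  have q0: "0 < real Q + 2^n" by (intro add_nonneg_pos) simp_all
  have l: "0 < l" unfolding l_def using q0 by simp
  have eq: "complex_of_real (DD n k (9^i * Q)) = (\<Sum>b<2^M. c b * E b)"
  proof -
    have a: "(9::nat)^i * Q = 3^(2*i) * Q" by (simp add: power_mult)
    have b: "(2::nat)^(2*i) * Q = 4^i * Q" by (simp add: power_mult)
    show ?thesis unfolding DD_fourier a iter_eq b c_def E_def M_def ..
  qed
  have cs: "(\<Sum>b<2^M. cmod (c b)^2) \<le> 4^i"
  proof -
    have "(\<Sum>b<2^M. cmod (c b)^2) \<le> 4^i * (\<Sum>b<(2::nat)^n. cmod (c0 n k b)^2)"
      unfolding c_def M_def by (rule iter_norm)
    also have "(\<Sum>b<(2::nat)^n. cmod (c0 n k b)^2) = 2^n * (1/2^n)^2"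
      unfolding c0_def ee_def by (simp add: norm_divide norm_power)
    also have "(2::real)^n * (1/2^n)^2 \<le> 1" by (simp add: power2_eq_square)
    finally show ?thesis by simp
  qed
  have es: "(\<Sum>b<2^M. cmod (E b)^2) \<le> 16^i * (real Q + 2^n)^2"
  proof -
    have "(\<Sum>b<2^M. cmod (E b)^2) \<le> real (4^i * Q) * (real (4^i * Q) + real ((2::nat)^M))"
      using parseval[of "2^M" "4^i * Q"] unfolding E_def by simp
    also have "\<dots> = 16^i * (real Q * (real Q + 2^n))"
    proof -
      have "(2::real)^M = 2^n * 4^i" unfolding M_def by (simp add: power_add power_mult)
      moreover have "(16::real)^i = 4^i * 4^i" by (simp flip: power_mult_distrib)
      ultimately show ?thesis by (simp add: algebra_simps)
    qed
    also have "\<dots> \<le> 16^i * (real Q + 2^n)^2"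
      by (intro mult_left_mono) (simp_all add: power2_eq_square mult_right_mono)
    finally show ?thesis .
  qed
  have "\<bar>DD n k (9^i * Q)\<bar> = cmod (\<Sum>b<2^M. c b * E b)" unfolding eq[symmetric] by simp
  also have "\<dots> \<le> (\<Sum>b<2^M. cmod (c b) * cmod (E b))"
    by (rule order_trans[OF norm_sum]) (simp add: norm_mult)
  also have "\<dots> \<le> (\<Sum>b<2^M. (l * cmod (c b)^2 + cmod (E b)^2 / l) / 2)"
    by (intro sum_mono amgm l)
  also have "\<dots> = (l * (\<Sum>b<2^M. cmod (c b)^2) + (\<Sum>b<2^M. cmod (E b)^2) / l) / 2"
    by (simp only: sum_divide_distrib[symmetric] sum_distrib_left sum.distrib)
  also have "\<dots> \<le> (l * 4^i + 16^i * (real Q + 2^n)^2 / l) / 2"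
    using cs es l by (intro divide_right_mono add_mono mult_left_mono) simp_all
  also have "\<dots> = 8^i * (real Q + 2^n)"
  proof -
    have q: "0 < real Q + 2^n" by (simp add: add_nonneg_pos)
    have "(8::real)^i = 2^i * 4^i" by (simp flip: power_mult_distrib)
    moreover have "(16::real)^i = 2^i * 8^i" by (simp flip: power_mult_distrib)
    ultimately have h1: "l * 4^i = 8^i * (real Q + 2^n)" and h2: "(16::real)^i = 8^i * 2^i"
      unfolding l_def by (simp_all add: algebra_simps)
    have p: "(0::real) < 2^i" by simp
    have "16^i * (real Q + 2^n)^2 / l = 8^i * (real Q + 2^n) * (2^i * (real Q + 2^n)) / l"
      unfolding h2 by (simp add: power2_eq_square algebra_simps)
    also have "\<dots> = 8^i * (real Q + 2^n)" unfolding l_def using p q by simp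
    finally show ?thesis unfolding h1 by simp
  qed
  finally show ?thesis .
qed



lemma DD_Suc: "DD n k (Suc N) = DD n k N + (if [int N = k] (mod 2^n) then sg N else 0)"
proof (cases "[int N = k] (mod 2^n)")
  case True
  then have "{x. x < Suc N \<and> [int x = k] (mod 2^n)} = insert N {x. x < N \<and> [int x = k] (mod 2^n)}"
    by (auto simp: less_Suc_eq)
  then show ?thesis unfolding DD_def using True by simp
next
  case False
  then have "{x. x < Suc N \<and> [int x = k] (mod 2^n)} = {x. x < N \<and> [int x = k] (mod 2^n)}"
    by (auto simp: less_Suc_eq)
  then show ?thesis unfolding DD_def using False by simp
qed

lemma DD_diff: "\<bar>DD n k (M + d) - DD n k M\<bar> \<le> real d"
proof (induction d)
  case 0 then show ?case by simp
next
  case (Suc d)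
  have "\<bar>(if [int (M+d) = k] (mod 2^n) then sg (M+d) else 0)\<bar> \<le> 1" using sg_abs by simp
  then show ?case using Suc.IH unfolding add_Suc_right DD_Suc by linarith
qed

lemma DD_bound: "\<bar>DD n k N\<bar> \<le> (8/9)^i * real N + 9^i * (2^n + 1)"
proof -
  define Q where "Q = N div 9^i"
  define d where "d = N mod 9^i"
  have N: "N = 9^i * Q + d" unfolding Q_def d_def by simp
  have d: "real d \<le> 9^i"
  proof -
    have "d < 9^i" unfolding d_def by simp
    then have "real d < real (9^i)" by (simp only: of_nat_less_iff)
    then show ?thesis by simp
  qed
  have "\<bar>DD n k N\<bar> \<le> \<bar>DD n k (9^i * Q)\<bar> + real d"
    using DD_diff[of n k "9^i * Q" d] unfolding N[symmetric] by linarith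
  also have "\<dots> \<le> 8^i * (real Q + 2^n) + 9^i" using DD_bound9[of n k i Q] d by linarith
  also have "8^i * (real Q + 2^n) = (8/9)^i * real (9^i * Q) + 8^i * 2^n"
    by (simp add: power_divide algebra_simps)
  also have "(8/9)^i * real (9^i * Q) \<le> (8/9)^i * real N"
    unfolding N by (intro mult_left_mono) simp_all
  also have "(8::real)^i * 2^n \<le> 9^i * 2^n"
    by (intro mult_right_mono power_mono) simp_all
  finally show ?thesis by (simp add: algebra_simps)
qed

lemma DD_lim: "(\<lambda>N. DD n k N / real N) \<longlonglongrightarrow> 0"
proof (rule LIMSEQ_I)
  fix r :: real assume r: "0 < r"
  obtain i where i: "(8/9::real)^i < r/2" using real_arch_pow_inv[of "r/2" "8/9"] r by auto
  define C :: real where "C = 9^i * (2^n + 1)"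
  have C: "0 < C" unfolding C_def by (simp add: add_pos_pos)
  obtain no :: nat where no: "2 * C / r < real no" using reals_Archimedean2 by blast
  have "\<forall>N\<ge>no. norm (DD n k N / real N - 0) < r"
  proof (intro allI impI)
    fix N assume "no \<le> N"
    then have NN: "2 * C / r < real N" using no by linarith
    have Npos: "0 < real N" using NN C r by (smt (verit) divide_pos_pos)
    have "C / real N < r/2" using NN Npos r by (simp add: field_simps)
    have "\<bar>DD n k N\<bar> / real N \<le> ((8/9)^i * real N + C) / real N"
      using DD_bound[of n k N i] Npos unfolding C_def by (simp add: divide_right_mono)
    also have "\<dots> = (8/9)^i + C / real N" using Npos by (simp add: field_simps)
    finally have "\<bar>DD n k N\<bar> / real N < r" using i \<open>C / real N < r/2\<close> by linarith
    then show "norm (DD n k N / real N - 0) < r" by simp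
  qed
  then show "\<exists>no. \<forall>N\<ge>no. norm (DD n k N / real N - 0) < r" by blast
qed



definition cntS :: "nat \<Rightarrow> int \<Rightarrow> nat \<Rightarrow> nat" where
  "cntS n k N = card {x. x < N \<and> [int x = k] (mod 2^n)}"

lemma cong_mod_iff: "[int x = k] (mod 2^n) \<longleftrightarrow> x mod 2^n = nat (k mod 2^n)"
proof -
  have "[int x = k] (mod 2^n) \<longleftrightarrow> int x mod 2^n = k mod 2^n" by (simp add: cong_def)
  also have "int x mod 2^n = int (x mod 2^n)" by (simp add: zmod_int)
  also have "k mod 2^n = int (nat (k mod 2^n))" by simp
  finally show ?thesis by (simp only: of_nat_eq_iff)
qed

lemma cntS_eq: "cntS n k N = card {y. y < N \<and> y mod 2^n = nat (k mod 2^n)}"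
  unfolding cntS_def cong_mod_iff ..

lemma cnt_lim: "(\<lambda>N. real (cntS n k N) / real N) \<longlonglongrightarrow> 1 / 2^n"
proof (rule LIMSEQ_I)
  fix r :: real assume r: "0 < r"
  define K :: nat where "K = 2^n"
  have K: "0 < K" unfolding K_def by simp
  have rr: "nat (k mod 2^n) < K"
  proof -
    have "k mod 2^n < 2^n" by simp
    then show ?thesis unfolding K_def by (simp add: nat_less_iff)
  qed
  obtain no :: nat where no: "1 / r < real no" using reals_Archimedean2 by blast
  have "\<forall>N\<ge>no. norm (real (cntS n k N) / real N - 1 / 2^n) < r"
  proof (intro allI impI)
    fix N assume "no \<le> N"
    then have NN: "1 / r < real N" using no by linarith
    have "0 < 1 / r" using r by simp
    then have Npos: "0 < real N" using NN by linarith
    have b1: "real N / real K - 1 \<le> real (cntS n k N)"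
      and b2: "real (cntS n k N) \<le> real N / real K + 1"
      unfolding cntS_eq K_def[symmetric] using cnt_bounds[OF K rr] by auto
    have "\<bar>real (cntS n k N) - real N / real K\<bar> \<le> 1" using b1 b2 by linarith
    moreover have "real (cntS n k N) / real N - 1 / real K = (real (cntS n k N) - real N / real K) / real N"
      using Npos by (simp add: diff_divide_distrib)
    ultimately have "\<bar>real (cntS n k N) / real N - 1 / real K\<bar> \<le> 1 / real N"
      using Npos by (simp add: abs_divide divide_right_mono)
    also have "1 / real N < r" using NN r Npos by (simp add: field_simps)
    finally show "norm (real (cntS n k N) / real N - 1 / 2^n) < r" unfolding K_def by simp
  qed
  then show "\<exists>no. \<forall>N\<ge>no. norm (real (cntS n k N) / real N - 1 / 2^n) < r" by blast
qed

lemma split_counts: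
  "real (Ccount n 0 k N) = (real (cntS n k N) + DD n k N) / 2"
  "real (Ccount n 1 k N) = (real (cntS n k N) - DD n k N) / 2"
proof -
  define P where "P = {x. x < N \<and> [int x = k] (mod 2^n)}"
  define P0 where "P0 = {i. i < N \<and> tm32 i = 0 \<and> [int i = k] (mod 2^n)}"
  define P1 where "P1 = {i. i < N \<and> tm32 i = 1 \<and> [int i = k] (mod 2^n)}"
  have PU: "P = P0 \<union> P1" unfolding P_def P0_def P1_def using tm32_lt2 by (auto simp: less_2_cases_iff)
  have fin: "finite P0" "finite P1" unfolding P0_def P1_def by auto
  have dis: "P0 \<inter> P1 = {}" unfolding P0_def P1_def by auto
  have cP: "real (card P) = real (card P0) + real (card P1)"
    unfolding PU using card_Un_disjoint[OF fin dis] by simp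
  have "DD n k N = (\<Sum>x\<in>P0. sg x) + (\<Sum>x\<in>P1. sg x)"
    unfolding DD_def P_def[symmetric] PU by (rule sum.union_disjoint[OF fin dis])
  also have "(\<Sum>x\<in>P0. sg x) = real (card P0)" unfolding P0_def sg_def by simp
  also have "(\<Sum>x\<in>P1. sg x) = - real (card P1)" unfolding P1_def sg_def by simp
  finally have D: "DD n k N = real (card P0) - real (card P1)" by simp
  have C0: "Ccount n 0 k N = card P0" unfolding Ccount_def P0_def ..
  have C1: "Ccount n 1 k N = card P1" unfolding Ccount_def P1_def ..
  have S: "cntS n k N = card P" unfolding cntS_def P_def ..
  show "real (Ccount n 0 k N) = (real (cntS n k N) + DD n k N) / 2" unfolding C0 S D cP by simp
  show "real (Ccount n 1 k N) = (real (cntS n k N) - DD n k N) / 2" unfolding C1 S D cP by simp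
qed

theorem theorem18:
  shows "(\<forall>(n::nat) (c::nat) (k::int). c \<in> {0, 1} \<longrightarrow>
            (\<lambda>N. real (Ccount n c k N) / real N) \<longlonglongrightarrow> 1 / 2 ^ (n + 1))
       \<and> (\<forall>c::nat. c \<in> {0, 1} \<longrightarrow>
            (\<lambda>N. real (card {i. i < N \<and> tm32 i = c}) / real N) \<longlonglongrightarrow> 1 / 2)"
proof -
  have main: "(\<lambda>N. real (Ccount n c k N) / real N) \<longlonglongrightarrow> 1 / 2 ^ (n + 1)"
    if c: "c \<in> {0, 1}" for n c k
  proof -
    have lim0: "(\<lambda>N. (real (cntS n k N) / real N + DD n k N / real N) / 2) \<longlonglongrightarrow> (1 / 2^n + 0) / 2"
      using tendsto_divide[OF tendsto_add[OF cnt_lim DD_lim] tendsto_const[of 2]] by simp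
    have lim1: "(\<lambda>N. (real (cntS n k N) / real N - DD n k N / real N) / 2) \<longlonglongrightarrow> (1 / 2^n - 0) / 2"
      using tendsto_divide[OF tendsto_diff[OF cnt_lim DD_lim] tendsto_const[of 2]] by simp
    have v: "(1 / 2^n + 0) / 2 = (1::real) / 2^(n+1)" "(1 / 2^n - 0) / 2 = (1::real) / 2^(n+1)" by simp_all
    show ?thesis
    proof (cases "c = 0")
      case True
      have "(\<lambda>N. real (Ccount n c k N) / real N) = (\<lambda>N. (real (cntS n k N) / real N + DD n k N / real N) / 2)"
        unfolding True split_counts by (simp add: add_divide_distrib mult.commute)
      then show ?thesis unfolding v(1)[symmetric] using lim0 by (simp only:)
    next
      case False
      then have "c = 1" using c by simp
      have "(\<lambda>N. real (Ccount n c k N) / real N) = (\<lambda>N. (real (cntS n k N) / real N - DD n k N / real N) / 2)"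
        unfolding \<open>c = 1\<close> split_counts by (simp add: diff_divide_distrib mult.commute)
      then show ?thesis unfolding v(2)[symmetric] using lim1 by (simp only:)
    qed
  qed
  moreover have "(\<lambda>N. real (card {i. i < N \<and> tm32 i = c}) / real N) \<longlonglongrightarrow> 1 / 2"
    if c: "c \<in> {0, 1}" for c :: nat
  proof -
    have "Ccount 0 c 0 N = card {i. i < N \<and> tm32 i = c}" for N
      unfolding Ccount_def by (simp add: cong_1)
    then show ?thesis using main[OF c, of 0 0] by simp
  qed
  ultimately show ?thesis by blast
qed


end
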